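(* Suppose $M\in\mathbb{R}_+^{p\times q}$ is such that both $M$ and $M^T$ are slack matrices of polytopes. Then there exists a polytope $P$ with $0$ in the interior of $P$ such that $M$ is a slack matrix of $P$ and $M^T$ is a slack matrix of the polar $P^\circ=\{y: x^Ty\le 1 \text{ for all } x\in P\}$.
   Context: For a polytope $P\subseteq\mathbb{R}^n$ with $\dim(P)\ge 1$, a slack matrix of $P$ is any matrix $S=[\mathbb{1},V]\cdot[w,-W]^T\in\mathbb{R}^{p\times q}$ (so $S_{ij}=w_j-W_jv_i$, with $v_i$ the $i$th row of $V$ and $W_j$ the $j$th row of $W$), where $V\in\mathbb{R}^{p\times n}$ satisfies $P=\operatorname{conv}(\text{rows of }V)$ and $W\in\mathbb{R}^{q\times n}$, $w\in\mathbb{R}^q$ satisfy $P=\{x\in\mathbb{R}^n: Wx\le w\}$. A matrix is a slack matrix of a polytope if it is a slack matrix of some polytope of dimension at least one. *)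

theory Defs
  imports Complex_Main
begin

text \<open>Points of R^n are represented as functions nat => real vanishing at all
coordinates k >= n; the dimension n is a natural number so that it can be
quantified inside formulas. Matrices are functions nat => nat => real,
indexed by row i < p and column j < q.\<close>

definition Rn :: "nat \<Rightarrow> (nat \<Rightarrow> real) set" where
  "Rn n = {x. \<forall>k\<ge>n. x k = 0}"

definition conv_rows :: "nat \<Rightarrow> nat \<Rightarrow> (nat \<Rightarrow> nat \<Rightarrow> real) \<Rightarrow> (nat \<Rightarrow> real) set" where
  "conv_rows n p V = {x \<in> Rn n. \<exists>l :: nat \<Rightarrow> real. (\<forall>i<p. 0 \<le> l i) \<and> (\<Sum>i<p. l i) = 1 \<and>
      (\<forall>k<n. x k = (\<Sum>i<p. l i * V i k))}"

definition ineq_set :: "nat \<Rightarrow> nat \<Rightarrow> (nat \<Rightarrow> nat \<Rightarrow> real) \<Rightarrow> (nat \<Rightarrow> real) \<Rightarrow> (nat \<Rightarrow> real) set" where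
  "ineq_set n q W w = {x \<in> Rn n. \<forall>j<q. (\<Sum>k<n. W j k * x k) \<le> w j}"

text \<open>dim(P) >= 1 for a (convex) set P: P contains two distinct points.\<close>
definition dim_ge_1 :: "(nat \<Rightarrow> real) set \<Rightarrow> bool" where
  "dim_ge_1 P \<longleftrightarrow> (\<exists>x\<in>P. \<exists>y\<in>P. x \<noteq> y)"

text \<open>S (p x q) is a slack matrix of the polytope P in R^n:
  S = [1, V] [w, -W]^T with P = conv(rows of V) = {x. W x <= w}, and dim P >= 1.\<close>
definition is_slack_matrix_of ::
  "nat \<Rightarrow> (nat \<Rightarrow> real) set \<Rightarrow> nat \<Rightarrow> nat \<Rightarrow> (nat \<Rightarrow> nat \<Rightarrow> real) \<Rightarrow> bool" where
  "is_slack_matrix_of n P p q S \<longleftrightarrow> P \<subseteq> Rn n \<and> dim_ge_1 P \<and>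
     (\<exists>V W :: nat \<Rightarrow> nat \<Rightarrow> real. \<exists>w :: nat \<Rightarrow> real.
        P = conv_rows n p V \<and> P = ineq_set n q W w \<and>
        (\<forall>i<p. \<forall>j<q. S i j = w j - (\<Sum>k<n. W j k * V i k)))"

definition is_slack_matrix :: "nat \<Rightarrow> nat \<Rightarrow> (nat \<Rightarrow> nat \<Rightarrow> real) \<Rightarrow> bool" where
  "is_slack_matrix p q S \<longleftrightarrow> (\<exists>n P. is_slack_matrix_of n P p q S)"

definition transp_mat :: "(nat \<Rightarrow> nat \<Rightarrow> real) \<Rightarrow> nat \<Rightarrow> nat \<Rightarrow> real" where
  "transp_mat M = (\<lambda>i j. M j i)"

definition polar :: "nat \<Rightarrow> (nat \<Rightarrow> real) set \<Rightarrow> (nat \<Rightarrow> real) set" where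
  "polar n P = {y \<in> Rn n. \<forall>x\<in>P. (\<Sum>k<n. x k * y k) \<le> 1}"

definition zero_in_interior :: "nat \<Rightarrow> (nat \<Rightarrow> real) set \<Rightarrow> bool" where
  "zero_in_interior n P \<longleftrightarrow>
     (\<exists>e>0. \<forall>x\<in>Rn n. sqrt (\<Sum>k<n. (x k)\<^sup>2) < e \<longrightarrow> x \<in> P)"

end

theory Submission
  imports Defs
begin

lemma sum_orth:
  fixes r :: "nat \<Rightarrow> real"
  assumes "\<forall>j<q. (\<Sum>k<N. r k * b j k) = 0"
  shows "(\<Sum>k<N. r k * (\<Sum>j<q. d j * b j k)) = 0"
proof -
  have "(\<Sum>k<N. r k * (\<Sum>j<q. d j * b j k)) = (\<Sum>k<N. \<Sum>j<q. d j * (r k * b j k))"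
    by (simp add: sum_distrib_left mult_ac)
  also have "\<dots> = (\<Sum>j<q. \<Sum>k<N. d j * (r k * b j k))" by (rule sum.swap)
  also have "\<dots> = (\<Sum>j<q. d j * (\<Sum>k<N. r k * b j k))" by (simp add: sum_distrib_left)
  also have "\<dots> = 0" using assms by simp
  finally show ?thesis .
qed

lemma proj_exists:
  fixes b :: "nat \<Rightarrow> nat \<Rightarrow> real" and N :: nat and e :: "nat \<Rightarrow> real"
  shows "\<exists>c r. (\<forall>k<N. e k = (\<Sum>j<q. c j * b j k) + r k) \<and> (\<forall>j<q. (\<Sum>k<N. r k * b j k) = 0)"
proof (induction q arbitrary: e)
  case 0 show ?case by (rule exI[of _ "\<lambda>_. 0"], rule exI[of _ e]) simp
next
  case (Suc q)
  obtain c r where c1: "\<forall>k<N. e k = (\<Sum>j<q. c j * b j k) + r k"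
     and c2: "\<forall>j<q. (\<Sum>k<N. r k * b j k) = 0" using Suc.IH[of e] by blast
  obtain c' r' where d1: "\<forall>k<N. b q k = (\<Sum>j<q. c' j * b j k) + r' k"
     and d2: "\<forall>j<q. (\<Sum>k<N. r' k * b j k) = 0" using Suc.IH[of "b q"] by blast
  define D where "D = (\<Sum>k<N. r' k * r' k)"
  show ?case
  proof (cases "D = 0")
    case True
    have r'0: "\<forall>k<N. r' k = 0"
    proof -
      have "\<forall>k\<in>{..<N}. r' k * r' k = 0"
        using True unfolding D_def by (subst sum_nonneg_eq_0_iff[symmetric]) auto
      then show ?thesis by simp
    qed
    have bq: "\<forall>k<N. b q k = (\<Sum>j<q. c' j * b j k)" using d1 r'0 by simp
    have eq: "(\<Sum>j<q. (c(q:=0)) j * b j k) = (\<Sum>j<q. c j * b j k)" for k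
      by (rule sum.cong) auto
    show ?thesis
    proof (rule exI[of _ "c(q:=0)"], rule exI[of _ r], intro conjI allI impI)
      fix k assume "k < N"
      then show "e k = (\<Sum>j<Suc q. (c(q:=0)) j * b j k) + r k" using c1 eq by simp
    next
      fix j assume "j < Suc q"
      show "(\<Sum>k<N. r k * b j k) = 0"
      proof (cases "j < q")
        case True then show ?thesis using c2 by simp
      next
        case False
        then have "j = q" using \<open>j < Suc q\<close> by simp
        have "(\<Sum>k<N. r k * b q k) = (\<Sum>k<N. r k * (\<Sum>j<q. c' j * b j k))"
          by (rule sum.cong) (auto simp: bq)
        also have "\<dots> = 0" by (rule sum_orth[OF c2])
        finally show ?thesis using \<open>j = q\<close> by simp
      qed
    qed
  next
    case False
    define t where "t = (\<Sum>k<N. r k * r' k) / D"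
    define r'' where "r'' = (\<lambda>k. r k - t * r' k)"
    define c'' where "c'' = (\<lambda>j. if j = q then t else c j - t * c' j)"
    have s1: "(\<Sum>j<q. c'' j * b j k) = (\<Sum>j<q. c j * b j k) - t * (\<Sum>j<q. c' j * b j k)" for k
    proof -
      have "(\<Sum>j<q. c'' j * b j k) = (\<Sum>j<q. c j * b j k - t * (c' j * b j k))"
        by (rule sum.cong) (auto simp: c''_def algebra_simps)
      then show ?thesis by (simp add: sum_subtractf sum_distrib_left)
    qed
    show ?thesis
    proof (rule exI[of _ c''], rule exI[of _ r''], intro conjI allI impI)
      fix k assume k: "k < N"
      have "(\<Sum>j<Suc q. c'' j * b j k) + r'' k = (\<Sum>j<q. c j * b j k) - t * (\<Sum>j<q. c' j * b j k) + t * b q k + r'' k"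
        using s1 by (simp add: c''_def)
      also have "\<dots> = e k" using c1 d1 k by (simp add: r''_def algebra_simps)
      finally show "e k = (\<Sum>j<Suc q. c'' j * b j k) + r'' k" by simp
    next
      fix j assume "j < Suc q"
      have orth: "(\<Sum>k<N. r'' k * b j k) = 0" if "j < q" for j
      proof -
        have "(\<Sum>k<N. r'' k * b j k) = (\<Sum>k<N. r k * b j k) - t * (\<Sum>k<N. r' k * b j k)"
          by (simp add: r''_def algebra_simps sum_subtractf sum_distrib_left)
        then show ?thesis using c2 d2 that by simp
      qed
      show "(\<Sum>k<N. r'' k * b j k) = 0"
      proof (cases "j < q")
        case True then show ?thesis using orth by simp
      next
        case False
        then have "j = q" using \<open>j < Suc q\<close> by simp
        have "(\<Sum>k<N. r'' k * b q k) = (\<Sum>k<N. r'' k * (\<Sum>j<q. c' j * b j k) + r'' k * r' k)"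
          by (rule sum.cong) (auto simp: d1 algebra_simps)
        also have "\<dots> = (\<Sum>k<N. r'' k * (\<Sum>j<q. c' j * b j k)) + (\<Sum>k<N. r'' k * r' k)"
          by (simp add: sum.distrib)
        also have "(\<Sum>k<N. r'' k * (\<Sum>j<q. c' j * b j k)) = 0"
          by (rule sum_orth) (use orth in auto)
        also have "(\<Sum>k<N. r'' k * r' k) = (\<Sum>k<N. r k * r' k) - t * D"
          by (simp add: r''_def D_def algebra_simps sum_subtractf sum_distrib_left)
        also have "\<dots> = 0" using \<open>D \<noteq> 0\<close> unfolding t_def by simp
        finally show ?thesis using \<open>j = q\<close> by simp
      qed
    qed
  qed
qed

lemma span_crit:
  fixes b :: "nat \<Rightarrow> nat \<Rightarrow> real" and e :: "nat \<Rightarrow> real"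
  assumes "\<And>h. (\<forall>j<q. (\<Sum>k<N. h k * b j k) = 0) \<Longrightarrow> (\<Sum>k<N. h k * e k) = 0"
  shows "\<exists>c. \<forall>k<N. e k = (\<Sum>j<q. c j * b j k)"
proof -
  obtain c r where c1: "\<forall>k<N. e k = (\<Sum>j<q. c j * b j k) + r k"
     and c2: "\<forall>j<q. (\<Sum>k<N. r k * b j k) = 0" using proj_exists by blast
  have "(\<Sum>k<N. r k * e k) = 0" using assms c2 by blast
  moreover have "(\<Sum>k<N. r k * e k) = (\<Sum>k<N. r k * (\<Sum>j<q. c j * b j k)) + (\<Sum>k<N. r k * r k)"
    using c1 by (simp add: sum.distrib[symmetric] algebra_simps)
  ultimately have "(\<Sum>k<N. r k * r k) = 0" using sum_orth[OF c2] by simp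
  then have "\<forall>k\<in>{..<N}. r k * r k = 0" by (subst sum_nonneg_eq_0_iff[symmetric]) auto
  then show ?thesis using c1 by (intro exI[of _ c]) auto
qed


lemma conv_bound:
  assumes "x \<in> conv_rows n p V" "k < n"
  shows "\<bar>x k\<bar> \<le> (\<Sum>i<p. \<bar>V i k\<bar>)"
proof -
  obtain l where l: "\<forall>i<p. 0 \<le> l i" "(\<Sum>i<p. l i) = 1" "\<forall>k<n. x k = (\<Sum>i<p. l i * V i k)"
    using assms(1) unfolding conv_rows_def by blast
  have le1: "l i \<le> 1" if "i < p" for i
  proof -
    have "l i \<le> (\<Sum>i<p. l i)" by (rule member_le_sum) (use l that in auto)
    then show ?thesis using l by simp
  qed
  have "\<bar>x k\<bar> = \<bar>\<Sum>i<p. l i * V i k\<bar>" using l assms by simp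
  also have "\<dots> \<le> (\<Sum>i<p. \<bar>l i * V i k\<bar>)" by (rule sum_abs)
  also have "\<dots> \<le> (\<Sum>i<p. \<bar>V i k\<bar>)"
  proof (rule sum_mono)
    fix i assume "i \<in> {..<p}"
    then have "0 \<le> l i" "l i \<le> 1" using l le1 by auto
    then show "\<bar>l i * V i k\<bar> \<le> \<bar>V i k\<bar>"
      by (simp add: abs_mult mult_left_le_one_le)
  qed
  finally show ?thesis .
qed

lemma ray:
  assumes P: "P = conv_rows n p V" and v: "v \<in> P" and d: "d \<in> Rn n" "\<exists>k. d k \<noteq> 0"
    and r: "\<forall>t\<ge>0. (\<lambda>k. v k + t * d k) \<in> P"
  shows False
proof -
  obtain k where k: "d k \<noteq> 0" using d by auto
  have kn: "k < n"
  proof (rule ccontr)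
    assume "\<not> k < n"
    then have "d k = 0" using d(1) unfolding Rn_def by simp
    then show False using k by simp
  qed
  define B where "B = (\<Sum>i<p. \<bar>V i k\<bar>)"
  define t where "t = (B + \<bar>v k\<bar> + 1) / \<bar>d k\<bar>"
  have B0: "0 \<le> B" unfolding B_def by (simp add: sum_nonneg)
  have t0: "t \<ge> 0" unfolding t_def using B0 by simp
  have "(\<lambda>k. v k + t * d k) \<in> conv_rows n p V" using r t0 P by auto
  then have "\<bar>v k + t * d k\<bar> \<le> B" using conv_bound kn B_def by fastforce
  moreover have "t * \<bar>d k\<bar> = B + \<bar>v k\<bar> + 1" unfolding t_def using k by simp
  moreover have "\<bar>t * d k\<bar> \<le> \<bar>v k + t * d k\<bar> + \<bar>v k\<bar>" by linarith
  ultimately show False using t0 by (simp add: abs_mult)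
qed

lemma q_pos:
  assumes "P = conv_rows n p V" "P = ineq_set n q W w" "dim_ge_1 P"
  shows "0 < q"
proof (rule ccontr)
  assume "\<not> 0 < q"
  then have q: "q = 0" by simp
  obtain a b where ab: "a \<in> P" "b \<in> P" "a \<noteq> b" using assms(3) unfolding dim_ge_1_def by blast
  have PR: "P = Rn n" using assms(2) q unfolding ineq_set_def by simp
  have "(\<lambda>k. b k - a k) \<in> Rn n" using ab PR unfolding Rn_def by auto
  moreover have "\<exists>k. b k - a k \<noteq> 0" using ab by (metis eq_iff_diff_eq_0 ext)
  moreover have "\<forall>t\<ge>0. (\<lambda>k. a k + t * (b k - a k)) \<in> P"
    using ab PR unfolding Rn_def by auto
  ultimately show False by (rule ray[OF assms(1) ab(1)])
qed


lemma sum_shift_case: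
  "(\<Sum>k<Suc n. h k * case_nat a f k) = h 0 * a + (\<Sum>k<n. h (Suc k) * f k)"
  by (subst sum.lessThan_Suc_shift) simp

lemma slack_ones:
  assumes P1: "P = conv_rows n p V" and P2: "P = ineq_set n q W w" and d: "dim_ge_1 P"
  shows "\<exists>u. (\<Sum>j<q. u j * w j) = 1 \<and> (\<forall>k<n. (\<Sum>j<q. u j * W j k) = 0)"
proof -
  define b where "b = (\<lambda>j. case_nat (w j) (W j))"
  define e :: "nat \<Rightarrow> real" where "e = case_nat 1 (\<lambda>_. 0)"
  have crit: "(\<Sum>k<Suc n. h k * e k) = 0" if H: "\<forall>j<q. (\<Sum>k<Suc n. h k * b j k) = 0" for h
  proof (rule ccontr)
    assume "(\<Sum>k<Suc n. h k * e k) \<noteq> 0"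
    then have h0: "h 0 \<noteq> 0" unfolding e_def sum_shift_case by simp
    have Hj: "h 0 * w j + (\<Sum>k<n. h (Suc k) * W j k) = 0" if "j < q" for j
      using H that unfolding b_def sum_shift_case by simp
    define x where "x = (\<lambda>k. if k < n then - h (Suc k) / h 0 else 0)"
    have xR: "x \<in> Rn n" unfolding Rn_def x_def by simp
    have Wx: "(\<Sum>k<n. W j k * x k) = w j" if "j < q" for j
    proof -
      have "(\<Sum>k<n. W j k * x k) = - (\<Sum>k<n. h (Suc k) * W j k) / h 0"
        by (simp add: x_def sum_divide_distrib sum_negf[symmetric] mult_ac)
      also have "\<dots> = w j" using Hj[OF that] h0 by (simp add: field_simps)
      finally show ?thesis .
    qed
    obtain a c where ac: "a \<in> P" "c \<in> P" "a \<noteq> c" using d unfolding dim_ge_1_def by blast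
    obtain v where v: "v \<in> P" "v \<noteq> x" using ac by blast
    have vR: "v \<in> Rn n" and vW: "\<forall>j<q. (\<Sum>k<n. W j k * v k) \<le> w j"
      using v P2 unfolding ineq_set_def by auto
    have xP: "x \<in> P" using P2 xR Wx unfolding ineq_set_def by simp
    show False
    proof (rule ray[OF P1 xP])
      show "(\<lambda>k. v k - x k) \<in> Rn n" using vR xR unfolding Rn_def by simp
      show "\<exists>k. v k - x k \<noteq> 0" using v by (metis eq_iff_diff_eq_0 ext)
      show "\<forall>t\<ge>0. (\<lambda>k. x k + t * (v k - x k)) \<in> P"
      proof (intro allI impI)
        fix t :: real assume t: "t \<ge> 0"
        have "(\<lambda>k. x k + t * (v k - x k)) \<in> Rn n" using vR xR unfolding Rn_def by simp
        moreover have "(\<Sum>k<n. W j k * (x k + t * (v k - x k))) \<le> w j" if "j < q" for j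
        proof -
          have "(\<Sum>k<n. W j k * (x k + t * (v k - x k))) =
                 (\<Sum>k<n. W j k * x k) + t * ((\<Sum>k<n. W j k * v k) - (\<Sum>k<n. W j k * x k))"
            by (simp add: algebra_simps sum.distrib sum_subtractf sum_distrib_left)
          also have "\<dots> = w j + t * ((\<Sum>k<n. W j k * v k) - w j)" using Wx that by simp
          also have "\<dots> \<le> w j" using vW that t by (simp add: mult_nonneg_nonpos)
          finally show ?thesis .
        qed
        ultimately show "(\<lambda>k. x k + t * (v k - x k)) \<in> P" using P2 unfolding ineq_set_def by simp
      qed
    qed
  qed
  obtain u where u: "\<forall>k<Suc n. e k = (\<Sum>j<q. u j * b j k)"
    using span_crit[where q=q and N="Suc n" and b=b and e=e] crit by blast
  have "(\<Sum>j<q. u j * w j) = 1" using u[rule_format, of 0] by (simp add: b_def e_def)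
  moreover have "\<forall>k<n. (\<Sum>j<q. u j * W j k) = 0"
    using u by (auto simp: b_def e_def)
  ultimately show ?thesis by blast
qed

lemma slack_ones_S:
  assumes "is_slack_matrix_of n P p q S"
  shows "\<exists>u. \<forall>i<p. (\<Sum>j<q. S i j * u j) = 1"
proof -
  obtain V W w where P1: "P = conv_rows n p V" and P2: "P = ineq_set n q W w" and d: "dim_ge_1 P"
    and S: "\<forall>i<p. \<forall>j<q. S i j = w j - (\<Sum>k<n. W j k * V i k)"
    using assms unfolding is_slack_matrix_of_def by blast
  obtain u where u1: "(\<Sum>j<q. u j * w j) = 1" and u2: "\<forall>k<n. (\<Sum>j<q. u j * W j k) = 0"
    using slack_ones[OF P1 P2 d] by blast
  have "(\<Sum>j<q. S i j * u j) = 1" if "i < p" for i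
  proof -
    have "(\<Sum>j<q. S i j * u j) = (\<Sum>j<q. u j * w j - (\<Sum>k<n. u j * W j k * V i k))"
      proof (rule sum.cong)
      fix j assume "j \<in> {..<q}"
      then have "S i j = w j - (\<Sum>k<n. W j k * V i k)" using S that by simp
      then show "S i j * u j = u j * w j - (\<Sum>k<n. u j * W j k * V i k)"
        by (simp add: right_diff_distrib sum_distrib_left mult_ac)
    qed simp
    also have "\<dots> = (\<Sum>j<q. u j * w j) - (\<Sum>j<q. \<Sum>k<n. u j * W j k * V i k)"
      by (simp add: sum_subtractf)
    also have "(\<Sum>j<q. \<Sum>k<n. u j * W j k * V i k) = (\<Sum>k<n. (\<Sum>j<q. u j * W j k) * V i k)"
      by (subst sum.swap) (simp add: sum_distrib_right)
    also have "\<dots> = 0" using u2 by simp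
    finally show ?thesis using u1 by simp
  qed
  then show ?thesis by blast
qed


lemma ray_ineq:
  assumes P1: "P = conv_rows n p V" and P2: "P = ineq_set n q W w" and a: "a \<in> P"
    and d: "d \<in> Rn n" "\<exists>k. d k \<noteq> 0" and Wd: "\<forall>j<q. (\<Sum>k<n. W j k * d k) \<le> 0"
  shows False
proof (rule ray[OF P1 a d])
  have aR: "a \<in> Rn n" and aW: "\<forall>j<q. (\<Sum>k<n. W j k * a k) \<le> w j"
    using a P2 unfolding ineq_set_def by auto
  show "\<forall>t\<ge>0. (\<lambda>k. a k + t * d k) \<in> P"
  proof (intro allI impI)
    fix t :: real assume t: "t \<ge> 0"
    have "(\<lambda>k. a k + t * d k) \<in> Rn n" using aR d unfolding Rn_def by simp
    moreover have "(\<Sum>k<n. W j k * (a k + t * d k)) \<le> w j" if "j < q" for j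
    proof -
      have "(\<Sum>k<n. W j k * (a k + t * d k)) = (\<Sum>k<n. W j k * a k) + t * (\<Sum>k<n. W j k * d k)"
        by (simp add: algebra_simps sum.distrib sum_distrib_left)
      also have "\<dots> \<le> w j"
      proof -
        have "t * (\<Sum>k<n. W j k * d k) \<le> 0" using Wd that t by (simp add: mult_nonneg_nonpos)
        then show ?thesis using aW that by force
      qed
      finally show ?thesis .
    qed
    ultimately show "(\<lambda>k. a k + t * d k) \<in> P" using P2 unfolding ineq_set_def by simp
  qed
qed

lemma center:
  assumes P1: "P = conv_rows n p V" and P2: "P = ineq_set n q W w" and dm: "dim_ge_1 P"
    and S: "\<forall>i<p. \<forall>j<q. M i j = w j - (\<Sum>k<n. W j k * V i k)"
    and c: "\<forall>j<q. (\<Sum>i<p. M i j * c i) = 1"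
  shows "\<exists>x0 lam. x0 \<in> Rn n \<and> lam > 0 \<and> (\<forall>j<q. w j - (\<Sum>k<n. W j k * x0 k) = lam)"
proof -
  define z0 where "z0 = (\<Sum>i<p. c i)"
  define z where "z = (\<lambda>k. if k < n then (\<Sum>i<p. c i * V i k) else 0)"
  have zR: "z \<in> Rn n" unfolding Rn_def z_def by simp
  have key: "z0 * w j - (\<Sum>k<n. W j k * z k) = 1" if j: "j < q" for j
  proof -
    have "(\<Sum>i<p. M i j * c i) = (\<Sum>i<p. c i * w j - (\<Sum>k<n. c i * V i k * W j k))"
    proof (rule sum.cong)
      fix i assume "i \<in> {..<p}"
      then have "M i j = w j - (\<Sum>k<n. W j k * V i k)" using S j by simp
      then show "M i j * c i = c i * w j - (\<Sum>k<n. c i * V i k * W j k)"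
        by (simp add: right_diff_distrib sum_distrib_left mult_ac)
    qed simp
    also have "\<dots> = z0 * w j - (\<Sum>i<p. \<Sum>k<n. c i * V i k * W j k)"
      by (simp add: sum_subtractf z0_def sum_distrib_right)
    also have "(\<Sum>i<p. \<Sum>k<n. c i * V i k * W j k) = (\<Sum>k<n. W j k * z k)"
      by (subst sum.swap) (simp add: z_def sum_distrib_left sum_distrib_right mult_ac)
    finally show ?thesis using c j by simp
  qed
  have qp: "0 < q" using q_pos[OF P1 P2 dm] .
  obtain a b where ab: "a \<in> P" "b \<in> P" "a \<noteq> b" using dm unfolding dim_ge_1_def by blast
  have z0: "z0 \<noteq> 0"
  proof
    assume z00: "z0 = 0"
    then have kz: "(\<Sum>k<n. W j k * z k) = -1" if "j < q" for j using key[OF that] by simp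
    show False
    proof (cases "\<exists>k. z k \<noteq> 0")
      case True
      show False
        by (rule ray_ineq[OF P1 P2 ab(1) zR True]) (use kz in simp)
    next
      case False
      then have "(\<Sum>k<n. W 0 k * z k) = 0" by simp
      then show False using kz[OF qp] by simp
    qed
  qed
  define x0 where "x0 = (\<lambda>k. z k / z0)"
  define lam where "lam = 1 / z0"
  have x0R: "x0 \<in> Rn n" using zR unfolding Rn_def x0_def by simp
  have x0W: "w j - (\<Sum>k<n. W j k * x0 k) = lam" if "j < q" for j
  proof -
    have "(\<Sum>k<n. W j k * x0 k) = (\<Sum>k<n. W j k * z k) / z0"
      by (simp add: x0_def sum_divide_distrib)
    then show ?thesis using key[OF that] z0 unfolding lam_def by (simp add: field_simps)
  qed
  have "lam > 0"
  proof (rule ccontr)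
    assume "\<not> lam > 0"
    then have ln: "lam < 0" using z0 unfolding lam_def by simp
    obtain v where v: "v \<in> P" "v \<noteq> x0" using ab by blast
    have vR: "v \<in> Rn n" and vW: "\<forall>j<q. (\<Sum>k<n. W j k * v k) \<le> w j"
      using v P2 unfolding ineq_set_def by auto
    show False
    proof (rule ray_ineq[OF P1 P2 v(1)])
      show "(\<lambda>k. v k - x0 k) \<in> Rn n" using vR x0R unfolding Rn_def by simp
      show "\<exists>k. v k - x0 k \<noteq> 0" using v by (metis eq_iff_diff_eq_0 ext)
      show "\<forall>j<q. (\<Sum>k<n. W j k * (v k - x0 k)) \<le> 0"
      proof (intro allI impI)
        fix j assume j: "j < q"
        have "(\<Sum>k<n. W j k * (v k - x0 k)) = (\<Sum>k<n. W j k * v k) - (\<Sum>k<n. W j k * x0 k)"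
          by (simp add: right_diff_distrib sum_subtractf)
        then show "(\<Sum>k<n. W j k * (v k - x0 k)) \<le> 0" using x0W[OF j] vW[rule_format, OF j] ln by linarith
      qed
    qed
  qed
  then show ?thesis using x0R x0W by blast
qed


lemma coord_le_norm:
  fixes x :: "nat \<Rightarrow> real"
  assumes "k < n"
  shows "\<bar>x k\<bar> \<le> sqrt (\<Sum>k<n. (x k)\<^sup>2)"
proof -
  have "(x k)\<^sup>2 \<le> (\<Sum>k<n. (x k)\<^sup>2)" by (rule member_le_sum) (use assms in auto)
  then have "sqrt ((x k)\<^sup>2) \<le> sqrt (\<Sum>k<n. (x k)\<^sup>2)" by (rule real_sqrt_le_mono)
  then show ?thesis by simp
qed

lemma zero_int:
  fixes lam :: real
  assumes lam: "lam > 0"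
  shows "zero_in_interior n (ineq_set n q W (\<lambda>_. lam))"
proof -
  define C where "C = (\<Sum>j<q. \<Sum>k<n. \<bar>W j k\<bar>)"
  have C0: "0 \<le> C" unfolding C_def by (simp add: sum_nonneg)
  define e where "e = lam / (C + 1)"
  have e0: "e > 0" unfolding e_def using lam C0 by simp
  have Ce: "C * e < lam"
  proof -
    have "C * e = lam * (C / (C + 1))" unfolding e_def using C0 by (simp add: field_simps)
    also have "\<dots> < lam * 1" using lam C0 by (intro mult_strict_left_mono) auto
    finally show ?thesis by simp
  qed
  show ?thesis unfolding zero_in_interior_def
  proof (intro exI[of _ e] conjI ballI impI)
    show "0 < e" by (rule e0)
    fix x assume xR: "x \<in> Rn n" and xn: "sqrt (\<Sum>k<n. (x k)\<^sup>2) < e"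
    have xk: "\<bar>x k\<bar> \<le> e" if "k < n" for k using coord_le_norm[OF that, of x] xn by simp
    have "(\<Sum>k<n. W j k * x k) \<le> lam" if j: "j < q" for j
    proof -
      have "(\<Sum>k<n. W j k * x k) \<le> (\<Sum>k<n. \<bar>W j k\<bar> * e)"
      proof (rule sum_mono)
        fix k assume "k \<in> {..<n}"
        then have "\<bar>x k\<bar> \<le> e" using xk by simp
        then have "\<bar>W j k\<bar> * \<bar>x k\<bar> \<le> \<bar>W j k\<bar> * e" by (simp add: mult_left_mono)
        moreover have "W j k * x k \<le> \<bar>W j k\<bar> * \<bar>x k\<bar>" by (simp add: abs_mult[symmetric])
        ultimately show "W j k * x k \<le> \<bar>W j k\<bar> * e" by linarith
      qed
      also have "\<dots> = (\<Sum>k<n. \<bar>W j k\<bar>) * e" by (simp add: sum_distrib_right)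
      also have "\<dots> \<le> C * e"
      proof (rule mult_right_mono)
        show "(\<Sum>k<n. \<bar>W j k\<bar>) \<le> C" unfolding C_def
          by (rule member_le_sum[where f="\<lambda>j. \<Sum>k<n. \<bar>W j k\<bar>"]) (use j in \<open>auto simp: sum_nonneg\<close>)
      qed (use e0 in simp)
      finally show ?thesis using Ce by simp
    qed
    then show "x \<in> ineq_set n q W (\<lambda>_. lam)" using xR unfolding ineq_set_def by simp
  qed
qed

lemma polar_conv:
  "polar n (conv_rows n p X) = {y \<in> Rn n. \<forall>i<p. (\<Sum>k<n. X i k * y k) \<le> 1}"
proof (intro equalityI subsetI)
  fix y assume y: "y \<in> polar n (conv_rows n p X)"
  have "(\<Sum>k<n. X i k * y k) \<le> 1" if i: "i < p" for i
  proof -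
    define x where "x = (\<lambda>k. if k < n then X i k else 0)"
    have "x \<in> conv_rows n p X" unfolding conv_rows_def
    proof (intro CollectI conjI exI[of _ "\<lambda>i'. if i' = i then 1 else 0"])
      show "x \<in> Rn n" unfolding x_def Rn_def by simp
      show "\<forall>i'<p. 0 \<le> (if i' = i then 1 else (0::real))" by simp
      show "(\<Sum>i'<p. if i' = i then 1 else (0::real)) = 1" using i by simp
      show "\<forall>k<n. x k = (\<Sum>i'<p. (if i' = i then 1 else 0) * X i' k)"
        using i by (simp add: x_def if_distrib[of "\<lambda>a. a * _"] cong: if_cong)
    qed
    then have "(\<Sum>k<n. x k * y k) \<le> 1" using y unfolding polar_def by blast
    moreover have "(\<Sum>k<n. x k * y k) = (\<Sum>k<n. X i k * y k)" by (rule sum.cong) (auto simp: x_def)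
    ultimately show ?thesis by simp
  qed
  then show "y \<in> {y \<in> Rn n. \<forall>i<p. (\<Sum>k<n. X i k * y k) \<le> 1}" using y unfolding polar_def by simp
next
  fix y assume y: "y \<in> {y \<in> Rn n. \<forall>i<p. (\<Sum>k<n. X i k * y k) \<le> 1}"
  have "(\<Sum>k<n. x k * y k) \<le> 1" if x: "x \<in> conv_rows n p X" for x
  proof -
    obtain l where l: "\<forall>i<p. 0 \<le> l i" "(\<Sum>i<p. l i) = 1" "\<forall>k<n. x k = (\<Sum>i<p. l i * X i k)"
      using x unfolding conv_rows_def by blast
    have "(\<Sum>k<n. x k * y k) = (\<Sum>k<n. \<Sum>i<p. l i * (X i k * y k))"
      using l(3) by (auto intro!: sum.cong simp: sum_distrib_left sum_distrib_right mult_ac)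
    also have "\<dots> = (\<Sum>i<p. l i * (\<Sum>k<n. X i k * y k))"
      by (subst sum.swap) (simp add: sum_distrib_left)
    also have "\<dots> \<le> (\<Sum>i<p. l i * 1)"
    proof (rule sum_mono)
      fix i assume "i \<in> {..<p}"
      then show "l i * (\<Sum>k<n. X i k * y k) \<le> l i * 1"
        using l y by (intro mult_left_mono) auto
    qed
    finally show ?thesis using l(2) by simp
  qed
  then show "y \<in> polar n (conv_rows n p X)" using y unfolding polar_def by simp
qed


lemma comb_swap:
  fixes beta :: "nat \<Rightarrow> real"
  shows "(\<Sum>j<q. beta j * (a - (\<Sum>k<n. A j k * B k))) =
         (\<Sum>j<q. beta j) * a - (\<Sum>k<n. B k * (\<Sum>j<q. beta j * A j k))"
proof -
  have "(\<Sum>j<q. beta j * (a - (\<Sum>k<n. A j k * B k))) =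
        (\<Sum>j<q. beta j * a - (\<Sum>k<n. beta j * A j k * B k))"
    by (simp add: right_diff_distrib sum_distrib_left mult_ac)
  also have "\<dots> = (\<Sum>j<q. beta j) * a - (\<Sum>j<q. \<Sum>k<n. beta j * A j k * B k)"
    by (simp add: sum_subtractf sum_distrib_right)
  also have "(\<Sum>j<q. \<Sum>k<n. beta j * A j k * B k) = (\<Sum>k<n. B k * (\<Sum>j<q. beta j * A j k))"
    by (subst sum.swap) (simp add: sum_distrib_left mult_ac)
  finally show ?thesis .
qed

lemma polar_sub:
  fixes lam :: real
  assumes lam: "lam > 0"
    and P1: "P' = conv_rows n p X" and P2: "P' = ineq_set n q W (\<lambda>_. lam)"
    and zi: "zero_in_interior n P'"
    and qp: "0 < q"
    and MX: "\<forall>i<p. \<forall>j<q. M i j = lam - (\<Sum>k<n. W j k * X i k)"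
    and Q1: "Q = conv_rows m q V2" and Q2: "Q = ineq_set m p W2 w2"
    and MQ: "\<forall>i<p. \<forall>j<q. M i j = w2 i - (\<Sum>k<m. W2 i k * V2 j k)"
    and zR: "z \<in> Rn n" and zX: "\<forall>i<p. (\<Sum>k<n. X i k * z k) \<le> 1"
  shows "z \<in> conv_rows n q (\<lambda>j k. W j k / lam)"
proof -
  define Y where "Y = (\<lambda>j k. W j k / lam)"
  have zeroP: "(\<lambda>_. 0) \<in> P'" using P2 lam unfolding ineq_set_def Rn_def by simp
  \<comment> \<open>Step 1: z is an affine combination of the Y j\<close>
  define b where "b = (\<lambda>j. case_nat 1 (Y j))"
  define e where "e = case_nat 1 z"
  have crit: "(\<Sum>k<Suc n. h k * e k) = 0" if H: "\<forall>j<q. (\<Sum>k<Suc n. h k * b j k) = 0" for h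
  proof -
    have Hj: "h 0 + (\<Sum>k<n. h (Suc k) * Y j k) = 0" if "j < q" for j
      using H that unfolding b_def sum_shift_case by simp
    define d where "d = (\<lambda>k. if k < n then h (Suc k) else 0)"
    have dR: "d \<in> Rn n" unfolding Rn_def d_def by simp
    have Wd: "(\<Sum>k<n. W j k * d k) = - lam * h 0" if "j < q" for j
    proof -
      have "(\<Sum>k<n. W j k * d k) = lam * (\<Sum>k<n. h (Suc k) * Y j k)"
        unfolding sum_distrib_left using lam by (intro sum.cong) (auto simp: d_def Y_def)
      moreover have "(\<Sum>k<n. h (Suc k) * Y j k) = - h 0" using Hj[OF that] by linarith
      ultimately show ?thesis by simp
    qed
    show ?thesis
    proof (cases "\<exists>k. d k \<noteq> 0")
      case True
      show ?thesis
      proof (cases "h 0 \<ge> 0")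
        case True
        have False
        proof (rule ray_ineq[OF P1 P2 zeroP dR \<open>\<exists>k. d k \<noteq> 0\<close>])
          show "\<forall>j<q. (\<Sum>k<n. W j k * d k) \<le> 0" using Wd lam True by simp
        qed
        then show ?thesis ..
      next
        case False
        have False
        proof (rule ray_ineq[OF P1 P2 zeroP])
          show "(\<lambda>k. - d k) \<in> Rn n" using dR unfolding Rn_def by simp
          show "\<exists>k. - d k \<noteq> 0" using \<open>\<exists>k. d k \<noteq> 0\<close> by simp
          show "\<forall>j<q. (\<Sum>k<n. W j k * - d k) \<le> 0"
          proof (intro allI impI)
            fix j assume "j < q"
            have "(\<Sum>k<n. W j k * - d k) = - (\<Sum>k<n. W j k * d k)" by (simp add: sum_negf)
            then show "(\<Sum>k<n. W j k * - d k) \<le> 0" using Wd[OF \<open>j < q\<close>] lam False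
              using mult_pos_neg[of lam "h 0"] by simp
          qed
        qed
        then show ?thesis ..
      qed
    next
      case False
      then have hs: "\<forall>k<n. h (Suc k) = 0" unfolding d_def by (metis (full_types))
      then have "h 0 = 0" using Hj[OF qp] by simp
      then show ?thesis unfolding e_def sum_shift_case using hs by simp
    qed
  qed
  obtain al where al: "\<forall>k<Suc n. e k = (\<Sum>j<q. al j * b j k)"
    using span_crit[where q=q and N="Suc n" and b=b and e=e] crit by blast
  have al1: "(\<Sum>j<q. al j) = 1" using al[rule_format, of 0] by (simp add: b_def e_def)
  have alz: "\<forall>k<n. z k = (\<Sum>j<q. al j * Y j k)" using al by (auto simp: b_def e_def)
  have c1: "(\<Sum>j<q. be j * M i j) = (\<Sum>j<q. be j) * lam - (\<Sum>k<n. X i k * (\<Sum>j<q. be j * W j k))"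
    if "i < p" for be i
  proof -
    have "(\<Sum>j<q. be j * M i j) = (\<Sum>j<q. be j * (lam - (\<Sum>k<n. W j k * X i k)))"
      using MX that by (intro sum.cong) auto
    then show ?thesis by (simp add: comb_swap)
  qed
  have c2: "(\<Sum>j<q. be j * M i j) = (\<Sum>j<q. be j) * w2 i - (\<Sum>k<m. W2 i k * (\<Sum>j<q. be j * V2 j k))"
    if "i < p" for be i
  proof -
    have "(\<Sum>j<q. be j * M i j) = (\<Sum>j<q. be j * (w2 i - (\<Sum>k<m. V2 j k * W2 i k)))"
      using MQ that by (intro sum.cong) (auto simp: mult_ac)
    then show ?thesis by (simp add: comb_swap)
  qed
  have c3: "(\<Sum>k<n. X i k * (\<Sum>j<q. be j * W j k)) = lam * (\<Sum>k<n. X i k * t k)"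
    if "\<forall>k<n. t k = (\<Sum>j<q. be j * Y j k)" for be t i
  proof -
    have "(\<Sum>k<n. X i k * (\<Sum>j<q. be j * W j k)) = (\<Sum>k<n. lam * (X i k * t k))"
    proof (rule sum.cong)
      fix k assume "k \<in> {..<n}"
      then have "t k = (\<Sum>j<q. be j * W j k) / lam" using that by (simp add: Y_def sum_divide_distrib)
      then show "X i k * (\<Sum>j<q. be j * W j k) = lam * (X i k * t k)" using lam by simp
    qed simp
    then show ?thesis by (simp add: sum_distrib_left)
  qed
  define y where "y = (\<lambda>k. if k < m then (\<Sum>j<q. al j * V2 j k) else 0)"
  have yW: "w2 i - (\<Sum>k<m. W2 i k * y k) = lam - lam * (\<Sum>k<n. X i k * z k)" if i: "i < p" for i
  proof -
    have "(\<Sum>k<m. W2 i k * y k) = (\<Sum>k<m. W2 i k * (\<Sum>j<q. al j * V2 j k))"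
      by (rule sum.cong) (auto simp: y_def)
    then show ?thesis using c1[OF i, of al] c2[OF i, of al] c3[OF alz] al1 by simp
  qed
  have "y \<in> Q"
    unfolding Q2 ineq_set_def
  proof (intro CollectI conjI allI impI)
    show "y \<in> Rn m" unfolding Rn_def y_def by simp
    fix i assume i: "i < p"
    have "lam * (\<Sum>k<n. X i k * z k) \<le> lam * 1" using zX i lam by (intro mult_left_mono) auto
    then show "(\<Sum>k<m. W2 i k * y k) \<le> w2 i" using yW[OF i] by simp
  qed
  then obtain mu where mu: "\<forall>j<q. 0 \<le> mu j" "(\<Sum>j<q. mu j) = 1" "\<forall>k<m. y k = (\<Sum>j<q. mu j * V2 j k)"
    using Q1 unfolding conv_rows_def by blast
  define z' where "z' = (\<lambda>k. if k < n then (\<Sum>j<q. mu j * Y j k) else 0)"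
  have z'C: "z' \<in> conv_rows n q Y"
    unfolding conv_rows_def using mu by (intro CollectI conjI exI[of _ mu]) (auto simp: z'_def Rn_def)
  have z'R: "z' \<in> Rn n" unfolding z'_def Rn_def by simp
  have z'eq: "\<forall>k<n. z' k = (\<Sum>j<q. mu j * Y j k)" by (simp add: z'_def)
  have Xzz: "(\<Sum>k<n. X i k * z k) = (\<Sum>k<n. X i k * z' k)" if i: "i < p" for i
  proof -
    have "(\<Sum>k<m. W2 i k * y k) = (\<Sum>k<m. W2 i k * (\<Sum>j<q. mu j * V2 j k))"
      using mu(3) by (intro sum.cong) auto
    then have "w2 i - (\<Sum>k<m. W2 i k * y k) = lam - lam * (\<Sum>k<n. X i k * z' k)"
      using c1[OF i, of mu] c2[OF i, of mu] c3[OF z'eq] mu(2) by simp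
    then show ?thesis using yW[OF i] lam by simp
  qed
  define hh where "hh = (\<lambda>k. z k - z' k)"
  have hhR: "hh \<in> Rn n" using zR z'R unfolding hh_def Rn_def by simp
  have Xh: "(\<Sum>k<n. X i k * hh k) = 0" if "i < p" for i
    using Xzz[OF that] by (simp add: hh_def right_diff_distrib sum_subtractf)
  obtain ee where ee: "ee > 0" "\<forall>x\<in>Rn n. sqrt (\<Sum>k<n. (x k)\<^sup>2) < ee \<longrightarrow> x \<in> P'"
    using zi unfolding zero_in_interior_def by blast
  define s where "s = sqrt (\<Sum>k<n. (hh k)\<^sup>2)"
  have s0: "s \<ge> 0" unfolding s_def by (simp add: sum_nonneg)
  define eps where "eps = ee / (s + 1)"
  have eps0: "eps > 0" unfolding eps_def using ee s0 by simp
  define x where "x = (\<lambda>k. eps * hh k)"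
  have xR: "x \<in> Rn n" using hhR unfolding x_def Rn_def by simp
  have "sqrt (\<Sum>k<n. (x k)\<^sup>2) = eps * s"
  proof -
    have "(\<Sum>k<n. (x k)\<^sup>2) = eps\<^sup>2 * (\<Sum>k<n. (hh k)\<^sup>2)"
      by (simp add: x_def power_mult_distrib sum_distrib_left)
    then show ?thesis using eps0 by (simp add: s_def real_sqrt_mult)
  qed
  moreover have "eps * s < ee"
  proof -
    have "eps * s = ee * (s / (s + 1))" unfolding eps_def using s0 by (simp add: field_simps)
    also have "\<dots> < ee * 1" using ee s0 by (intro mult_strict_left_mono) auto
    finally show ?thesis by simp
  qed
  ultimately have "x \<in> P'" using ee(2) xR by simp
  then obtain ka where ka: "\<forall>k<n. x k = (\<Sum>i<p. ka i * X i k)" using P1 unfolding conv_rows_def by blast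
  have "(\<Sum>k<n. x k * hh k) = (\<Sum>k<n. \<Sum>i<p. ka i * (X i k * hh k))"
    using ka by (auto intro!: sum.cong simp: sum_distrib_left sum_distrib_right mult_ac)
  also have "\<dots> = (\<Sum>i<p. ka i * (\<Sum>k<n. X i k * hh k))"
    by (subst sum.swap) (simp add: sum_distrib_left)
  also have "\<dots> = 0" using Xh by simp
  finally have "eps * (\<Sum>k<n. hh k * hh k) = 0" by (simp add: x_def sum_distrib_left mult_ac)
  then have "(\<Sum>k<n. hh k * hh k) = 0" using eps0 by simp
  then have "\<forall>k\<in>{..<n}. hh k * hh k = 0" by (subst sum_nonneg_eq_0_iff[symmetric]) auto
  then have "\<forall>k<n. z k = z' k" unfolding hh_def by simp
  then have "z = z'"
  proof -
    assume zk: "\<forall>k<n. z k = z' k"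
    show "z = z'"
    proof (rule ext)
      fix k show "z k = z' k"
      proof (cases "k < n")
        case True then show ?thesis using zk by simp
      next
        case False then show ?thesis using zR z'R unfolding Rn_def by simp
      qed
    qed
  qed
  then show ?thesis using z'C unfolding Y_def by simp
qed


theorem proposition2p18:
  fixes M :: "nat \<Rightarrow> nat \<Rightarrow> real" and p q :: nat
  assumes "\<forall>i<p. \<forall>j<q. 0 \<le> M i j"
    and "is_slack_matrix p q M"
    and "is_slack_matrix q p (transp_mat M)"
  shows "\<exists>n P. zero_in_interior n P \<and> is_slack_matrix_of n P p q M \<and>
           is_slack_matrix_of n (polar n P) q p (transp_mat M)"
proof -
  obtain n P where SP: "is_slack_matrix_of n P p q M" using assms(2) unfolding is_slack_matrix_def by blast
  obtain V W w where Psub: "P \<subseteq> Rn n" and dP: "dim_ge_1 P" and P1: "P = conv_rows n p V"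
    and P2: "P = ineq_set n q W w" and MS: "\<forall>i<p. \<forall>j<q. M i j = w j - (\<Sum>k<n. W j k * V i k)"
    using SP unfolding is_slack_matrix_of_def by blast
  obtain m Q where SQ: "is_slack_matrix_of m Q q p (transp_mat M)"
    using assms(3) unfolding is_slack_matrix_def by blast
  obtain V2 W2 w2 where Q1: "Q = conv_rows m q V2" and Q2: "Q = ineq_set m p W2 w2"
    and MT: "\<forall>j<q. \<forall>i<p. transp_mat M j i = w2 i - (\<Sum>k<m. W2 i k * V2 j k)"
    using SQ unfolding is_slack_matrix_of_def by blast
  have MQ: "\<forall>i<p. \<forall>j<q. M i j = w2 i - (\<Sum>k<m. W2 i k * V2 j k)"
    using MT unfolding transp_mat_def by simp
  obtain u where u: "\<forall>j<q. (\<Sum>i<p. transp_mat M j i * u i) = 1" using slack_ones_S[OF SQ] by blast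
  have c: "\<forall>j<q. (\<Sum>i<p. M i j * u i) = 1" using u unfolding transp_mat_def by simp
  obtain x0 lam where x0R: "x0 \<in> Rn n" and lam: "lam > 0"
    and x0W: "\<forall>j<q. w j - (\<Sum>k<n. W j k * x0 k) = lam"
    using center[OF P1 P2 dP MS c] by blast
  define X where "X = (\<lambda>i k. V i k - x0 k)"
  define Y where "Y = (\<lambda>j k. W j k / lam)"
  define P' where "P' = ineq_set n q W (\<lambda>_. lam)"
  have RnS: "(\<lambda>k. x k + x0 k) \<in> Rn n \<longleftrightarrow> x \<in> Rn n" for x using x0R unfolding Rn_def by auto
  have shift: "x \<in> P' \<longleftrightarrow> x \<in> Rn n \<and> (\<lambda>k. x k + x0 k) \<in> P" for x
  proof -
    have "(\<Sum>k<n. W j k * (x k + x0 k)) = (\<Sum>k<n. W j k * x k) + (w j - lam)" if "j < q" for j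
    proof -
      have "(\<Sum>k<n. W j k * x0 k) = w j - lam" using x0W[rule_format, OF that] by linarith
      then show ?thesis by (simp add: distrib_left sum.distrib)
    qed
    then show ?thesis unfolding P'_def P2 ineq_set_def using RnS by auto
  qed
  have shift2: "x \<in> conv_rows n p X \<longleftrightarrow> x \<in> Rn n \<and> (\<lambda>k. x k + x0 k) \<in> P" for x
  proof -
    have eq: "(\<Sum>i<p. l i * X i k) = (\<Sum>i<p. l i * V i k) - x0 k" if "(\<Sum>i<p. l i) = 1" for l k
    proof -
      have "(\<Sum>i<p. l i * X i k) = (\<Sum>i<p. l i * V i k) - (\<Sum>i<p. l i) * x0 k"
        by (simp add: X_def right_diff_distrib sum_subtractf sum_distrib_right)
      then show ?thesis using that by simp
    qed
    show ?thesis
    proof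
      assume "x \<in> conv_rows n p X"
      then obtain l where xR: "x \<in> Rn n" and l: "\<forall>i<p. 0 \<le> l i" "(\<Sum>i<p. l i) = 1"
        "\<forall>k<n. x k = (\<Sum>i<p. l i * X i k)" unfolding conv_rows_def by blast
      have "\<forall>k<n. x k + x0 k = (\<Sum>i<p. l i * V i k)" using l eq[OF l(2)] by simp
      then have "(\<lambda>k. x k + x0 k) \<in> conv_rows n p V"
        unfolding conv_rows_def using l xR RnS by blast
      then show "x \<in> Rn n \<and> (\<lambda>k. x k + x0 k) \<in> P" using xR P1 by simp
    next
      assume "x \<in> Rn n \<and> (\<lambda>k. x k + x0 k) \<in> P"
      then obtain l where xR: "x \<in> Rn n" and l: "\<forall>i<p. 0 \<le> l i" "(\<Sum>i<p. l i) = 1"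
        "\<forall>k<n. x k + x0 k = (\<Sum>i<p. l i * V i k)" unfolding P1 conv_rows_def by auto
      have "\<forall>k<n. x k = (\<Sum>i<p. l i * X i k)"
      proof (intro allI impI)
        fix k assume "k < n"
        then have "x k + x0 k = (\<Sum>i<p. l i * V i k)" using l(3) by simp
        then show "x k = (\<Sum>i<p. l i * X i k)" using eq[OF l(2), of k] by linarith
      qed
      then show "x \<in> conv_rows n p X" unfolding conv_rows_def using l xR by blast
    qed
  qed
  have P'1: "P' = conv_rows n p X" using shift shift2 by blast
  have P'sub: "P' \<subseteq> Rn n" unfolding P'_def ineq_set_def by auto
  have dP': "dim_ge_1 P'"
  proof -
    obtain a b where ab: "a \<in> P" "b \<in> P" "a \<noteq> b" using dP unfolding dim_ge_1_def by blast
    have inP: "(\<lambda>k. a k - x0 k) \<in> P'" if "a \<in> P" for a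
    proof -
      have "(\<lambda>k. (a k - x0 k) + x0 k) = a" by simp
      moreover have "(\<lambda>k. a k - x0 k) \<in> Rn n" using that Psub x0R unfolding Rn_def by auto
      ultimately show ?thesis using shift that by simp
    qed
    have "(\<lambda>k. a k - x0 k) \<noteq> (\<lambda>k. b k - x0 k)"
    proof
      assume "(\<lambda>k. a k - x0 k) = (\<lambda>k. b k - x0 k)"
      then have "a k - x0 k = b k - x0 k" for k by meson
      then have "a k = b k" for k by (metis diff_add_cancel)
      then show False using ab by auto
    qed
    then show ?thesis unfolding dim_ge_1_def using inP ab by blast
  qed
  have MX: "\<forall>i<p. \<forall>j<q. M i j = lam - (\<Sum>k<n. W j k * X i k)"
  proof (intro allI impI)
    fix i j assume i: "i < p" and j: "j < q"
    have "(\<Sum>k<n. W j k * X i k) = (\<Sum>k<n. W j k * V i k) - (\<Sum>k<n. W j k * x0 k)"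
      by (simp add: X_def right_diff_distrib sum_subtractf)
    moreover have "(\<Sum>k<n. W j k * x0 k) = w j - lam" using x0W[rule_format, OF j] by linarith
    ultimately show "M i j = lam - (\<Sum>k<n. W j k * X i k)" using MS i j by simp
  qed
  have zi: "zero_in_interior n P'" unfolding P'_def by (rule zero_int[OF lam])
  have qp: "0 < q" by (rule q_pos[OF P1 P2 dP])
  have pol: "polar n P' = {y \<in> Rn n. \<forall>i<p. (\<Sum>k<n. X i k * y k) \<le> 1}"
    unfolding P'1 by (rule polar_conv)
  have polC: "polar n P' = conv_rows n q Y"
  proof (intro equalityI subsetI)
    fix z assume "z \<in> polar n P'"
    then have zR: "z \<in> Rn n" and zX: "\<forall>i<p. (\<Sum>k<n. X i k * z k) \<le> 1" using pol by auto
    show "z \<in> conv_rows n q Y" unfolding Y_def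
      by (rule polar_sub[OF lam P'1 _ zi qp MX Q1 Q2 MQ zR zX]) (simp add: P'_def)
  next
    fix y assume y: "y \<in> conv_rows n q Y"
    obtain l where l: "\<forall>j<q. 0 \<le> l j" "(\<Sum>j<q. l j) = 1" "\<forall>k<n. y k = (\<Sum>j<q. l j * Y j k)"
      and yR: "y \<in> Rn n" using y unfolding conv_rows_def by blast
    have "(\<Sum>k<n. X i k * y k) \<le> 1" if i: "i < p" for i
    proof -
      have XY: "(\<Sum>k<n. X i k * Y j k) \<le> 1" if j: "j < q" for j
      proof -
        have "(\<Sum>k<n. X i k * Y j k) = (\<Sum>k<n. W j k * X i k) / lam"
          by (simp add: Y_def sum_divide_distrib mult_ac)
        also have "\<dots> = (lam - M i j) / lam" using MX i j by simp
        also have "\<dots> \<le> 1" using assms(1) i j lam by (simp add: divide_le_eq_1)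
        finally show ?thesis .
      qed
      have "(\<Sum>k<n. X i k * y k) = (\<Sum>k<n. \<Sum>j<q. l j * (X i k * Y j k))"
        using l(3) by (auto intro!: sum.cong simp: sum_distrib_left mult_ac)
      also have "\<dots> = (\<Sum>j<q. l j * (\<Sum>k<n. X i k * Y j k))"
        by (subst sum.swap) (simp add: sum_distrib_left)
      also have "\<dots> \<le> (\<Sum>j<q. l j * 1)"
      proof (rule sum_mono)
        fix j assume "j \<in> {..<q}"
        then show "l j * (\<Sum>k<n. X i k * Y j k) \<le> l j * 1" using l XY by (intro mult_left_mono) auto
      qed
      finally show ?thesis using l(2) by simp
    qed
    then show "y \<in> polar n P'" using pol yR by simp
  qed
  have polI: "polar n P' = ineq_set n p (\<lambda>i k. lam * X i k) (\<lambda>_. lam)"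
  proof -
    have "(\<Sum>k<n. lam * X i k * y k) \<le> lam \<longleftrightarrow> (\<Sum>k<n. X i k * y k) \<le> 1" for i y
    proof -
      have "(\<Sum>k<n. lam * X i k * y k) = lam * (\<Sum>k<n. X i k * y k)"
        by (simp add: sum_distrib_left mult_ac)
      then show ?thesis using lam by simp
    qed
    then show ?thesis unfolding pol ineq_set_def by simp
  qed
  have n0: "0 < n"
  proof (rule ccontr)
    assume "\<not> 0 < n"
    then have n: "n = 0" by simp
    obtain a b where ab: "a \<in> P" "b \<in> P" "a \<noteq> b" using dP unfolding dim_ge_1_def by blast
    have "\<forall>k. a k = 0" "\<forall>k. b k = 0" using ab Psub n unfolding Rn_def by auto
    then have "a = b" by (intro ext) simp
    then show False using ab by simp
  qed
  have dPP: "dim_ge_1 (polar n P')"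
  proof -
    define eps where "eps = 1 / (1 + (\<Sum>i<p. \<bar>X i 0\<bar>))"
    have S0: "0 \<le> (\<Sum>i<p. \<bar>X i 0\<bar>)" by (simp add: sum_nonneg)
    have S1: "0 < 1 + (\<Sum>i<p. \<bar>X i 0\<bar>)" using S0 by linarith
    have eps0: "eps > 0" unfolding eps_def using S1 by simp
    define y :: "nat \<Rightarrow> real" where "y = (\<lambda>k. if k = 0 then eps else 0)"
    have "y \<in> polar n P'" unfolding pol
    proof (intro CollectI conjI allI impI)
      show "y \<in> Rn n" using n0 unfolding y_def Rn_def by simp
      fix i assume i: "i < p"
      have "(\<Sum>k<n. X i k * y k) = X i 0 * eps"
        using n0 by (simp add: y_def if_distrib[of "\<lambda>a. _ * a"] cong: if_cong)
      also have "\<dots> \<le> \<bar>X i 0\<bar> * eps" using eps0 by (intro mult_right_mono) auto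
      also have "\<dots> \<le> (\<Sum>i<p. \<bar>X i 0\<bar>) * eps"
        by (intro mult_right_mono member_le_sum[where f="\<lambda>i. \<bar>X i 0\<bar>"]) (use i eps0 in auto)
      also have "\<dots> \<le> 1" unfolding eps_def using S1 by (simp add: field_simps)
      finally show "(\<Sum>k<n. X i k * y k) \<le> 1" .
    qed
    moreover have "(\<lambda>_. 0) \<in> polar n P'" unfolding pol Rn_def by simp
    moreover have "y \<noteq> (\<lambda>_. 0)" using eps0 unfolding y_def by (metis less_irrefl)
    ultimately show ?thesis unfolding dim_ge_1_def by blast
  qed
  have slack1: "is_slack_matrix_of n P' p q M"
    unfolding is_slack_matrix_of_def
    using P'sub dP' P'1 MX by (intro conjI exI[of _ X] exI[of _ W] exI[of _ "\<lambda>_. lam"]) (auto simp: P'_def)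
  have TM: "\<forall>i<q. \<forall>j<p. transp_mat M i j = lam - (\<Sum>k<n. lam * X j k * Y i k)"
  proof (intro allI impI)
    fix i j assume i: "i < q" and j: "j < p"
    have "(\<Sum>k<n. lam * X j k * Y i k) = (\<Sum>k<n. W i k * X j k)"
      using lam by (intro sum.cong) (auto simp: Y_def)
    then show "transp_mat M i j = lam - (\<Sum>k<n. lam * X j k * Y i k)"
      using MX i j unfolding transp_mat_def by simp
  qed
  have PPsub: "polar n P' \<subseteq> Rn n" unfolding polar_def by auto
  have slack2: "is_slack_matrix_of n (polar n P') q p (transp_mat M)"
    unfolding is_slack_matrix_of_def using PPsub dPP polC polI TM by blast
  show ?thesis using zi slack1 slack2 by blast
qed

end
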